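(* Let $v_1,\ldots,v_n$ be a matching ordering of a tournament $G$. If $v$ is a vertex of $G$ with indegree $b$, then $v$ is one of $v_b$, $v_{b+1}$, $v_{b+2}$. Moreover, $v=v_b$ if and only if $v$ is the head of a backedge, $v=v_{b+2}$ if and only if $v$ is the tail of a backedge, and $v=v_{b+1}$ if and only if $v$ is not an end of any backedge.
   Context: A tournament is a finite, non-null, loopless directed graph in which for any two distinct vertices $u,v$ there is exactly one edge with both ends in $\{u,v\}$. The indegree of $v$ is the number of vertices $u$ with an edge from $u$ to $v$. Given an ordering $v_1,\dots,v_n$ of the vertices, a backedge is an edge from $v_j$ to $v_i$ with $j>i$ (tail $v_j$, head $v_i$); the ordering is a matching ordering if every vertex is the head or tail of at most one backedge. *)

theory Defs
  imports Main
begin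

definition tournament :: "'a set \<Rightarrow> ('a \<times> 'a) set \<Rightarrow> bool" where
  "tournament V E \<longleftrightarrow> finite V \<and> V \<noteq> {} \<and> E \<subseteq> V \<times> V \<and>
     (\<forall>u\<in>V. (u,u) \<notin> E) \<and>
     (\<forall>u\<in>V. \<forall>w\<in>V. u \<noteq> w \<longrightarrow> ((u,w) \<in> E \<longleftrightarrow> (w,u) \<notin> E))"

definition indegree :: "'a set \<Rightarrow> ('a \<times> 'a) set \<Rightarrow> 'a \<Rightarrow> nat" where
  "indegree V E x = card {u \<in> V. (u,x) \<in> E}"

definition is_ordering :: "'a set \<Rightarrow> (nat \<Rightarrow> 'a) \<Rightarrow> bool" where
  "is_ordering V v \<longleftrightarrow> bij_betw v {1..card V} V"

text \<open>Backedges, as pairs of positions (i,j): an edge from v_j (tail) to v_i (head) with j > i.\<close>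
definition backedges :: "'a set \<Rightarrow> ('a \<times> 'a) set \<Rightarrow> (nat \<Rightarrow> 'a) \<Rightarrow> (nat \<times> nat) set" where
  "backedges V E v = {(i,j). 1 \<le> i \<and> i < j \<and> j \<le> card V \<and> (v j, v i) \<in> E}"

definition is_head_of_backedge :: "'a set \<Rightarrow> ('a \<times> 'a) set \<Rightarrow> (nat \<Rightarrow> 'a) \<Rightarrow> nat \<Rightarrow> bool" where
  "is_head_of_backedge V E v k \<longleftrightarrow> (\<exists>j. (k,j) \<in> backedges V E v)"

definition is_tail_of_backedge :: "'a set \<Rightarrow> ('a \<times> 'a) set \<Rightarrow> (nat \<Rightarrow> 'a) \<Rightarrow> nat \<Rightarrow> bool" where
  "is_tail_of_backedge V E v k \<longleftrightarrow> (\<exists>i. (i,k) \<in> backedges V E v)"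

definition matching_ordering :: "'a set \<Rightarrow> ('a \<times> 'a) set \<Rightarrow> (nat \<Rightarrow> 'a) \<Rightarrow> bool" where
  "matching_ordering V E v \<longleftrightarrow> is_ordering V v \<and>
     (\<forall>k\<in>{1..card V}. card {(i,j) \<in> backedges V E v. i = k \<or> j = k} \<le> 1)"

end

theory Submission
  imports Defs
begin

theorem proposition5p1:
  fixes V :: "'a set" and E :: "('a \<times> 'a) set" and v :: "nat \<Rightarrow> 'a" and k b :: nat
  assumes "tournament V E"
    and "matching_ordering V E v"
    and "k \<in> {1..card V}"
    and "b = indegree V E (v k)"
  shows "(k = b \<or> k = b + 1 \<or> k = b + 2) \<and>
         (k = b \<longleftrightarrow> is_head_of_backedge V E v k) \<and>
         (k = b + 2 \<longleftrightarrow> is_tail_of_backedge V E v k) \<and>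
         (k = b + 1 \<longleftrightarrow> \<not> is_head_of_backedge V E v k \<and> \<not> is_tail_of_backedge V E v k)"
proof -
  define n where "n = card V"
  have tour: "finite V" "E \<subseteq> V \<times> V" "\<forall>u\<in>V. (u,u) \<notin> E"
    "\<forall>u\<in>V. \<forall>w\<in>V. u \<noteq> w \<longrightarrow> ((u,w) \<in> E \<longleftrightarrow> (w,u) \<notin> E)"
    using assms(1) unfolding tournament_def by blast+
  have bij: "bij_betw v {1..n} V"
    using assms(2) unfolding matching_ordering_def is_ordering_def n_def by blast
  have mat: "card {(i,j) \<in> backedges V E v. i = k \<or> j = k} \<le> 1"
    using assms(2,3) unfolding matching_ordering_def by blast
  have kn: "1 \<le> k" "k \<le> n" using assms(3) unfolding n_def by auto
  have inj: "inj_on v {1..n}" using bij bij_betw_def by blast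
  have vin: "\<And>i. i \<in> {1..n} \<Longrightarrow> v i \<in> V" using bij bij_betwE by blast
  define S where "S = {i\<in>{1..n}. (v i, v k) \<in> E}"
  define B where "B = {j. (k,j) \<in> backedges V E v}"
  define T where "T = {i. (i,k) \<in> backedges V E v}"
  have Bd: "B = {j. k < j \<and> j \<le> n \<and> (v j, v k) \<in> E}"
    unfolding B_def backedges_def using kn by (auto simp: n_def)
  have Td: "T = {i. 1 \<le> i \<and> i < k \<and> (v k, v i) \<in> E}"
    unfolding T_def backedges_def using kn by (auto simp: n_def)
  have fB: "finite B" unfolding Bd by (rule finite_subset[of _ "{..n}"]) auto
  have fT: "finite T" unfolding Td by (rule finite_subset[of _ "{..k}"]) auto
  have b_eq: "b = card S"
  proof -
    have "{u \<in> V. (u, v k) \<in> E} = v ` S"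
    proof
      show "{u \<in> V. (u, v k) \<in> E} \<subseteq> v ` S"
      proof
        fix u assume "u \<in> {u \<in> V. (u, v k) \<in> E}"
        then have u: "u \<in> V" "(u, v k) \<in> E" by auto
        then obtain i where "i \<in> {1..n}" "u = v i" using bij unfolding bij_betw_def by blast
        then show "u \<in> v ` S" using u S_def by auto
      qed
    next
      show "v ` S \<subseteq> {u \<in> V. (u, v k) \<in> E}" using vin unfolding S_def by blast
    qed
    moreover have "inj_on v S" using inj unfolding S_def by (rule inj_on_subset) blast
    ultimately show ?thesis using assms(4) unfolding indegree_def by (simp add: card_image)
  qed
  have Sd: "S = ({1..<k} - T) \<union> B"
  proof -
    have "\<And>i. 1 \<le> i \<Longrightarrow> i < k \<Longrightarrow> (v i, v k) \<in> E \<longleftrightarrow> (v k, v i) \<notin> E"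
    proof -
      fix i assume i: "1 \<le> i" "i < k"
      have "v i \<noteq> v k" using inj i kn unfolding inj_on_def by fastforce
      moreover have "v i \<in> V" "v k \<in> V" using vin i kn by auto
      ultimately show "(v i, v k) \<in> E \<longleftrightarrow> (v k, v i) \<notin> E" using tour(4) by blast
    qed
    note iff = this
    show ?thesis
    proof (rule set_eqI)
      fix i
      show "i \<in> S \<longleftrightarrow> i \<in> ({1..<k} - T) \<union> B"
      proof (cases "i < k")
        case True
        then show ?thesis unfolding S_def Bd Td using iff[of i] kn by auto
      next
        case False
        show ?thesis
        proof (cases "i = k")
          case True
          then show ?thesis unfolding S_def Bd Td using tour(3) vin kn by auto
        next
          case False
          then show ?thesis unfolding S_def Bd Td using \<open>\<not> i < k\<close> kn by auto
        qed
      qed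
    qed
  qed
  have cS: "card S = (k - 1) - card T + card B"
  proof -
    have d: "({1..<k} - T) \<inter> B = {}" unfolding Bd by auto
    have "T \<subseteq> {1..<k}" unfolding Td by auto
    then have "card ({1..<k} - T) = (k-1) - card T" by (simp add: card_Diff_subset fT)
    then show ?thesis using Sd d fB by (simp add: card_Un_disjoint)
  qed
  have cBT: "card B + card T \<le> 1"
  proof -
    have eq: "{(i,j) \<in> backedges V E v. i = k \<or> j = k} = (\<lambda>j. (k,j)) ` B \<union> (\<lambda>i. (i,k)) ` T"
      unfolding B_def T_def by auto
    have d: "(\<lambda>j. (k,j)) ` B \<inter> (\<lambda>i. (i,k)) ` T = {}" unfolding Bd Td by auto
    have "card ((\<lambda>j. (k,j)) ` B \<union> (\<lambda>i. (i,k)) ` T) = card B + card T"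
      using d fB fT by (simp add: card_Un_disjoint card_image inj_on_def)
    then show ?thesis using mat eq by simp
  qed
  have Tk: "card T \<le> k - 1" proof -
    have "T \<subseteq> {1..<k}" unfolding Td by auto
    then show ?thesis using card_mono[of "{1..<k}" T] by simp
  qed
  have head: "is_head_of_backedge V E v k \<longleftrightarrow> card B \<noteq> 0"
    unfolding is_head_of_backedge_def using fB B_def by auto
  have tail: "is_tail_of_backedge V E v k \<longleftrightarrow> card T \<noteq> 0"
    unfolding is_tail_of_backedge_def using fT T_def by auto
  show ?thesis using cBT cS b_eq head tail kn Tk by auto
qed

end
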